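(* Let $p$ be a monic polynomial of degree $d$, let $\alpha\in\mathbb{C}$, and set $\tilde p(Z)=(Z-\alpha)p(Z)$. (1) For a point $\underline z=(z_1,\dots,z_d,\alpha)\in\mathbb{C}^{d+1}$ with pairwise distinct entries, the Jacobi matrix of $W_{\tilde p}$ at $\underline z$ has the block form $$DW_{\tilde p}(\underline z)=\begin{pmatrix} DW_p(\underline z') & *\\ 0_{1\times d} & \lambda\end{pmatrix},$$ where $\underline z'=(z_1,\dots,z_d)$, $*$ is some $d\times1$ column, and $\lambda=1-\dfrac{p(\alpha)}{\prod_{j=1}^d(\alpha-z_j)}$. (2) If $q\in\mathbb{C}^d$ is a periodic point of $W_p$ of period $n$ such that all eigenvalues of $D(W_p^{\circ n})(q)$ have absolute value strictly less than $1$, then for all $\alpha$ with $|\alpha|$ sufficiently large, $\tilde q=(q,\alpha)\in\mathbb{C}^{d+1}$ is a periodic point of $W_{\tilde p}$ of period $n$ and all eigenvalues of $D(W_{\tilde p}^{\circ n})(\tilde q)$ have absolute value strictly less than $1$.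
   Context: For a monic polynomial $p\in\mathbb{C}[Z]$ of degree $d$, the Weierstrass map $W_p$ is the partially defined map $\mathbb{C}^d\setminus\Delta\to\mathbb{C}^d$, $\underline z\mapsto \underline z'$ with $z'_k=z_k-\dfrac{p(z_k)}{\prod_{j\ne k}(z_k-z_j)}$, where $\Delta=\{\underline z\in\mathbb{C}^d: z_j=z_k\text{ for some }j<k\}$. *)

theory Defs
  imports "HOL-Analysis.Analysis" "HOL-Computational_Algebra.Polynomial"
begin

text \<open>Points of C^d are vectors complex^'n with d = CARD('n); the Weierstrass map
  is made total (division by zero gives 0 on the diagonal), which does not affect
  its values or derivatives off the closed set Delta.\<close>

definition weierstrass :: "complex poly \<Rightarrow> complex^'n::finite \<Rightarrow> complex^'n" where
  "weierstrass p z = (\<chi> k. z$k - poly p (z$k) / (\<Prod>j\<in>UNIV - {k}. z$k - z$j))"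

definition in_Delta :: "complex^'n::finite \<Rightarrow> bool" where
  "in_Delta z \<longleftrightarrow> (\<exists>j k. j \<noteq> k \<and> z$j = z$k)"

definition is_eigenvalue :: "complex^'n^'n \<Rightarrow> complex \<Rightarrow> bool" where
  "is_eigenvalue A \<mu> \<longleftrightarrow> (\<exists>v. v \<noteq> 0 \<and> A *v v = \<mu> *s v)"

text \<open>q is a periodic point of W_p of (exact) period n: all orbit points lie off Delta
  (so the partially defined map can be iterated), W_p^n(q) = q, and n is minimal.\<close>
definition periodic_point :: "complex poly \<Rightarrow> complex^'n::finite \<Rightarrow> nat \<Rightarrow> bool" where
  "periodic_point p q n \<longleftrightarrow> n > 0 \<and> (\<forall>m<n. \<not> in_Delta ((weierstrass p ^^ m) q))
     \<and> (weierstrass p ^^ n) q = q \<and> (\<forall>m. 0 < m \<and> m < n \<longrightarrow> (weierstrass p ^^ m) q \<noteq> q)"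

definition extend_pt :: "complex^'n \<Rightarrow> complex \<Rightarrow> complex^('n option)" where
  "extend_pt q a = (\<chi> i. case i of Some k \<Rightarrow> q$k | None \<Rightarrow> a)"

definition restrict_pt :: "complex^('n option) \<Rightarrow> complex^'n" where
  "restrict_pt z = (\<chi> k. z $ Some k)"

end

theory Submission
  imports Defs
begin

declare mult_pCons_left[simp del]

lemma has_derivative_vec_lambda:
  fixes f :: "'a::real_normed_vector \<Rightarrow> complex^'n::finite"
  assumes "\<And>i. ((\<lambda>x. f x $ i) has_derivative (\<lambda>h. f' h $ i)) (at a)"
  shows "(f has_derivative f') (at a)"
proof -
  have "((\<lambda>x. f x \<bullet> b) has_derivative (\<lambda>x. f' x \<bullet> b)) (at a)" if "b \<in> Basis" for b
  proof -
    from that obtain i c where b: "b = axis i c" and c: "c \<in> Basis"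
      by (auto simp: Basis_vec_def)
    have "((\<lambda>x. (f x $ i) \<bullet> c) has_derivative (\<lambda>x. (f' x $ i) \<bullet> c)) (at a)"
      using bounded_linear.has_derivative[OF bounded_linear_inner_left assms[of i]] .
    then show ?thesis by (simp add: b inner_axis)
  qed
  then show ?thesis
    using has_derivative_componentwise_within[of f f' a UNIV] by simp
qed

lemma differentiable_vec_lambda:
  fixes f :: "'a::real_normed_vector \<Rightarrow> complex^'n::finite"
  assumes "\<And>i. (\<lambda>x. f x $ i) differentiable (at a)"
  shows "f differentiable (at a)"
proof -
  let ?f' = "\<lambda>h. \<chi> i. frechet_derivative (\<lambda>x. f x $ i) (at a) h"
  have "(f has_derivative ?f') (at a)"
    by (rule has_derivative_vec_lambda) (use assms frechet_derivative_works in auto)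
  then show ?thesis unfolding differentiable_def by blast
qed

lemma has_derivative_vec_nth'[derivative_intros]:
  "(f has_derivative f') F \<Longrightarrow> ((\<lambda>x. f x $ i) has_derivative (\<lambda>h. f' h $ i)) F"
  by (rule bounded_linear.has_derivative[OF bounded_linear_vec_nth])

lemma has_derivative_poly_comp[derivative_intros]:
  fixes f :: "'a::real_normed_vector \<Rightarrow> complex"
  assumes "(f has_derivative f') (at x)"
  shows "((\<lambda>y. poly p (f y)) has_derivative (\<lambda>h. poly (pderiv p) (f x) * f' h)) (at x)"
proof -
  have "(poly p has_derivative (\<lambda>h. poly (pderiv p) (f x) * h)) (at (f x))"
    using poly_DERIV[of p "f x"] by (simp add: has_field_derivative_def)
  from diff_chain_at[OF assms this] show ?thesis by (simp add: o_def)
qed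

lemma sum_UNIV_option:
  "(\<Sum>i\<in>(UNIV::'n::finite option set). f i) = f None + (\<Sum>k\<in>UNIV. f (Some k))"
  by (simp add: UNIV_option_conv sum.reindex)

lemma prod_UNIV_option:
  "(\<Prod>i\<in>(UNIV::'n::finite option set). f i) = f None * (\<Prod>k\<in>UNIV. f (Some k))"
  by (simp add: UNIV_option_conv prod.reindex)

lemma prod_minus_Some:
  "(\<Prod>j\<in>(UNIV::'n::finite option set) - {Some k}. f j) = f None * (\<Prod>j\<in>UNIV - {k}. f (Some j))"
proof -
  have "(UNIV::'n option set) - {Some k} = insert None (Some ` (UNIV - {k}))"
    by (auto simp: UNIV_option_conv)
  then show ?thesis by (simp add: prod.reindex)
qed

lemma prod_minus_None:
  "(\<Prod>j\<in>(UNIV::'n::finite option set) - {None}. f j) = (\<Prod>j\<in>UNIV. f (Some j))"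
proof -
  have "(UNIV::'n option set) - {None} = Some ` UNIV"
    by (auto simp: UNIV_option_conv)
  then show ?thesis by (simp add: prod.reindex)
qed

lemma weierstrass_differentiable:
  fixes z :: "complex^'n::finite"
  assumes "\<not> in_Delta z"
  shows "weierstrass p differentiable (at z)"
proof (rule differentiable_vec_lambda)
  fix k
  have nz: "(\<Prod>j\<in>UNIV - {k}. z$k - z$j) \<noteq> 0"
    using assms by (auto simp: in_Delta_def; metis)
  show "(\<lambda>x. weierstrass p x $ k) differentiable (at z)"
    unfolding weierstrass_def differentiable_def vec_lambda_beta
    apply (rule exI)
    apply (rule derivative_intros)+
    using nz apply simp
    done
qed


lemma extend_pt_nth[simp]:
  "extend_pt v c $ Some k = v $ k" "extend_pt v c $ None = c"
  by (simp_all add: extend_pt_def)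

lemma restrict_pt_nth[simp]: "restrict_pt w $ k = w $ Some k"
  by (simp add: restrict_pt_def)

lemma weierstrass_ext_formula:
  fixes w :: "complex^('n::finite option)"
  shows "weierstrass ([:-\<alpha>,1:]*p) w = extend_pt (\<chi> k. w$Some k - (w$Some k - \<alpha>)/(w$Some k - w$None) * (w$Some k - weierstrass p (restrict_pt w) $ k)) (w$None - (w$None - \<alpha>) * (poly p (w$None) / (\<Prod>j\<in>UNIV. w$None - w$Some j)))"
proof -
  have "weierstrass ([:-\<alpha>,1:]*p) w $ i = extend_pt (\<chi> k. w$Some k - (w$Some k - \<alpha>)/(w$Some k - w$None) * (w$Some k - weierstrass p (restrict_pt w) $ k)) (w$None - (w$None - \<alpha>) * (poly p (w$None) / (\<Prod>j\<in>UNIV. w$None - w$Some j))) $ i" for i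
  proof (cases i)
    case None
    then show ?thesis by (simp add: weierstrass_def prod_minus_None algebra_simps)
  next
    case (Some k)
    then show ?thesis by (simp add: weierstrass_def prod_minus_Some algebra_simps)
  qed
  then show ?thesis by (simp add: vec_eq_iff)
qed

lemma restrict_pt_has_derivative: "(restrict_pt has_derivative restrict_pt) (at z)"
  by (rule has_derivative_vec_lambda) (simp, intro derivative_intros)


lemma restrict_not_Delta: "\<not> in_Delta z \<Longrightarrow> \<not> in_Delta (restrict_pt z)"
  by (simp add: in_Delta_def) (metis option.inject)

lemma aux_field:
  fixes \<beta> hk hN d F :: complex
  assumes "\<beta> \<noteq> 0"
  shows "hk - (\<beta> / \<beta> * (hk - d) + (- \<beta> * (inverse \<beta> * (hk - hN) * inverse \<beta>) + hk / \<beta>) * F) = d - hN * (F / \<beta>)"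
  using assms by (simp add: field_simps)

lemma weierstrass_ext_deriv:
  fixes z :: "complex^('n::finite option)"
  assumes zN: "z$None = \<alpha>" and nD: "\<not> in_Delta z"
  shows "(weierstrass ([:-\<alpha>,1:]*p) has_derivative
    (\<lambda>e. extend_pt (frechet_derivative (weierstrass p) (at (restrict_pt z)) (restrict_pt e)
        - e$None *s (\<chi> k. (z$Some k - weierstrass p (restrict_pt z) $ k)/(z$Some k - \<alpha>)))
      (e$None * (1 - poly p \<alpha> / (\<Prod>j\<in>UNIV. \<alpha> - z$Some j))))) (at z)"
proof -
  define D where "D = frechet_derivative (weierstrass p) (at (restrict_pt z))"
  have WD: "(weierstrass p has_derivative D) (at (restrict_pt z))"
    unfolding D_def using weierstrass_differentiable[OF restrict_not_Delta[OF nD]]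
    by (simp add: frechet_derivative_works)
  have WRD: "((\<lambda>w. weierstrass p (restrict_pt w)) has_derivative (\<lambda>e. D (restrict_pt e))) (at z)"
    using diff_chain_at[OF restrict_pt_has_derivative WD] by (simp add: o_def)
  have eq: "weierstrass ([:-\<alpha>,1:]*p) = (\<lambda>w. extend_pt (\<chi> k. w$Some k - (w$Some k - \<alpha>)/(w$Some k - w$None) * (w$Some k - weierstrass p (restrict_pt w) $ k)) (w$None - (w$None - \<alpha>) * (poly p (w$None) / (\<Prod>j\<in>UNIV. w$None - w$Some j))))"
    by (rule ext) (rule weierstrass_ext_formula)
  show ?thesis
    unfolding eq D_def[symmetric]
  proof (rule has_derivative_vec_lambda)
    fix i :: "'n option"
    show "((\<lambda>x. extend_pt (\<chi> k. x$Some k - (x$Some k - \<alpha>)/(x$Some k - x$None) * (x$Some k - weierstrass p (restrict_pt x) $ k)) (x$None - (x$None - \<alpha>) * (poly p (x$None) / (\<Prod>j\<in>UNIV. x$None - x$Some j))) $ i) has_derivative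
      (\<lambda>h. extend_pt (D (restrict_pt h) - h$None *s (\<chi> k. (z$Some k - weierstrass p (restrict_pt z) $ k)/(z$Some k - \<alpha>))) (h$None * (1 - poly p \<alpha> / (\<Prod>j\<in>UNIV. \<alpha> - z$Some j))) $ i)) (at z)"
    proof (cases i)
      case None
      have nz: "(\<Prod>j\<in>UNIV. z$None - z$Some j) \<noteq> 0"
        using nD by (auto simp: in_Delta_def)
      obtain h' where hD: "((\<lambda>x. poly p (x$None) / (\<Prod>j\<in>UNIV. x$None - x$Some j)) has_derivative h') (at z)"
        apply atomize_elim
        apply (rule exI)
        apply (rule derivative_intros)+
        using nz apply simp
        done
      have aD: "((\<lambda>x. x$None - \<alpha>) has_derivative (\<lambda>h. h$None)) (at z)"
        by (auto intro!: derivative_eq_intros)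
      have "((\<lambda>x. x$None - (x$None - \<alpha>) * (poly p (x$None) / (\<Prod>j\<in>UNIV. x$None - x$Some j))) has_derivative
         (\<lambda>h. h$None - ((z$None - \<alpha>) * h' h + h$None * (poly p (z$None) / (\<Prod>j\<in>UNIV. z$None - z$Some j))))) (at z)"
        by (intro has_derivative_diff has_derivative_mult aD hD derivative_intros)
      then show ?thesis using None zN
        by (simp add: algebra_simps)
    next
      case (Some k)
      have nz: "z$Some k - \<alpha> \<noteq> 0"
        using nD zN by (auto simp: in_Delta_def)
      have rD: "((\<lambda>x. (x$Some k - \<alpha>)/(x$Some k - x$None)) has_derivative
         (\<lambda>h. - (z$Some k - \<alpha>) * (inverse (z$Some k - \<alpha>) * (h$Some k - h$None) * inverse (z$Some k - \<alpha>)) + (h$Some k) / (z$Some k - \<alpha>))) (at z)"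
        apply (rule has_derivative_eq_rhs)
         apply (rule has_derivative_divide)
           apply (rule derivative_intros)+
        using nz zN apply simp_all
        done
      have FD: "((\<lambda>x. x$Some k - weierstrass p (restrict_pt x) $ k) has_derivative (\<lambda>h. h$Some k - D (restrict_pt h) $ k)) (at z)"
        by (intro has_derivative_diff derivative_intros has_derivative_vec_nth'[OF WRD])
      have "((\<lambda>x. x$Some k - (x$Some k - \<alpha>)/(x$Some k - x$None) * (x$Some k - weierstrass p (restrict_pt x) $ k)) has_derivative
         (\<lambda>h. h$Some k - ((z$Some k - \<alpha>)/(z$Some k - \<alpha>) * (h$Some k - D (restrict_pt h) $ k) + 
           (- (z$Some k - \<alpha>) * (inverse (z$Some k - \<alpha>) * (h$Some k - h$None) * inverse (z$Some k - \<alpha>)) + (h$Some k) / (z$Some k - \<alpha>)) * (z$Some k - weierstrass p (restrict_pt z) $ k)))) (at z)"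
        using has_derivative_diff[OF _ has_derivative_mult[OF rD FD]] zN
        by (simp add: derivative_intros)
      then show ?thesis using Some
        apply (simp only: extend_pt_nth vec_lambda_beta)
        apply (erule has_derivative_eq_rhs)
        apply (rule ext)
        apply (simp only: extend_pt_nth vector_minus_component vector_smult_component vec_lambda_beta)
        apply (rule aux_field[OF nz])
        done
    qed
  qed
qed


lemma restrict_axis_Some: "restrict_pt (axis (Some j) (1::complex)) = axis j 1"
  by (simp add: vec_eq_iff axis_def)

lemma restrict_extend[simp]: "restrict_pt (extend_pt w a) = w"
  by (simp add: vec_eq_iff)

lemma extend_restrict: "extend_pt (restrict_pt e) (e$None) = e"
proof -
  have "extend_pt (restrict_pt e) (e$None) $ i = e $ i" for i by (cases i) simp_all
  then show ?thesis by (simp add: vec_eq_iff)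
qed

lemma part1:
  fixes z :: "complex^('n::finite option)"
  assumes "z $ None = \<alpha>" "\<not> in_Delta z"
  shows "weierstrass ([:-\<alpha>, 1:] * p) differentiable (at z) \<and>
       weierstrass p differentiable (at (restrict_pt z)) \<and>
       (\<forall>i j. jacobian (weierstrass ([:-\<alpha>, 1:] * p)) (at z) $ Some i $ Some j
               = jacobian (weierstrass p) (at (restrict_pt z)) $ i $ j) \<and>
       (\<forall>j. jacobian (weierstrass ([:-\<alpha>, 1:] * p)) (at z) $ None $ Some j = 0) \<and>
       jacobian (weierstrass ([:-\<alpha>, 1:] * p)) (at z) $ None $ None
         = 1 - poly p \<alpha> / (\<Prod>j\<in>UNIV. \<alpha> - z $ Some j)"
proof -
  note B = weierstrass_ext_deriv[OF assms, of p]
  have J: "jacobian (weierstrass ([:-\<alpha>, 1:] * p)) (at z) = matrix (\<lambda>e. extend_pt (frechet_derivative (weierstrass p) (at (restrict_pt z)) (restrict_pt e)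
        - e$None *s (\<chi> k. (z$Some k - weierstrass p (restrict_pt z) $ k)/(z$Some k - \<alpha>)))
      (e$None * (1 - poly p \<alpha> / (\<Prod>j\<in>UNIV. \<alpha> - z$Some j))))"
    unfolding jacobian_def using frechet_derivative_at[OF B] by simp
  show ?thesis
  proof (intro conjI allI)
    show "weierstrass ([:-\<alpha>, 1:] * p) differentiable (at z)"
      using B unfolding differentiable_def by blast
    show "weierstrass p differentiable (at (restrict_pt z))"
      by (rule weierstrass_differentiable[OF restrict_not_Delta[OF assms(2)]])
  qed (unfold J; simp add: matrix_def restrict_axis_Some jacobian_def; simp add: axis_def)+
qed

lemma step_ext:
  fixes w :: "complex^'n::finite"
  assumes "\<forall>k. \<alpha> \<noteq> w$k"
  shows "weierstrass ([:-\<alpha>,1:]*p) (extend_pt w \<alpha>) = extend_pt (weierstrass p w) \<alpha>"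
proof -
  have "weierstrass ([:-\<alpha>,1:]*p) (extend_pt w \<alpha>) $ i = extend_pt (weierstrass p w) \<alpha> $ i" for i
  proof (cases i)
    case None then show ?thesis by (simp add: weierstrass_ext_formula)
  next
    case (Some k)
    have "w$k - \<alpha> \<noteq> 0" using assms by auto
    then show ?thesis using Some by (simp add: weierstrass_ext_formula)
  qed
  then show ?thesis by (simp add: vec_eq_iff)
qed

lemma orbit_ext:
  fixes q :: "complex^'n::finite"
  assumes "\<forall>m<N. \<forall>k. \<alpha> \<noteq> (weierstrass p ^^ m) q $ k"
  shows "m \<le> N \<Longrightarrow> (weierstrass ([:-\<alpha>,1:]*p) ^^ m) (extend_pt q \<alpha>) = extend_pt ((weierstrass p ^^ m) q) \<alpha>"
proof (induction m)
  case 0 then show ?case by simp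
next
  case (Suc m)
  then have "m < N" by simp
  with Suc assms show ?case by (simp add: step_ext)
qed

lemma extend_not_Delta:
  assumes "\<not> in_Delta w" "\<forall>k. \<alpha> \<noteq> w$k"
  shows "\<not> in_Delta (extend_pt w \<alpha>)"
  unfolding in_Delta_def
proof (intro notI, elim exE conjE)
  fix j k :: "'a option" assume "j \<noteq> k" "extend_pt w \<alpha> $ j = extend_pt w \<alpha> $ k"
  then show False using assms
    by (cases j; cases k) (auto simp: in_Delta_def)
qed


lemma iter_deriv:
  fixes q :: "complex^'n::finite"
  assumes "\<forall>m<N. \<not> in_Delta ((weierstrass p ^^ m) q)"
    and "\<forall>m<N. \<forall>k. \<alpha> \<noteq> (weierstrass p ^^ m) q $ k"
  shows "\<exists>L M. (weierstrass p ^^ N has_derivative L) (at q) \<and> M 0 = 0 \<and>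
    (weierstrass ([:-\<alpha>,1:]*p) ^^ N has_derivative
      (\<lambda>e. extend_pt (L (restrict_pt e) + M (e$None))
             (e$None * (\<Prod>m<N. 1 - poly p \<alpha> / (\<Prod>j\<in>UNIV. \<alpha> - (weierstrass p ^^ m) q $ j))))) (at (extend_pt q \<alpha>))"
  using assms
proof (induction N)
  case 0
  show ?case
    by (rule exI[of _ "\<lambda>x. x"], rule exI[of _ "\<lambda>_. 0"])
       (simp add: extend_restrict has_derivative_ident)
next
  case (Suc N)
  let ?W = "weierstrass p" and ?Wt = "weierstrass ([:-\<alpha>,1:]*p)"
  let ?C = "\<Prod>m<N. 1 - poly p \<alpha> / (\<Prod>j\<in>UNIV. \<alpha> - (weierstrass p ^^ m) q $ j)"
  from Suc.prems have pr1: "\<forall>m<N. \<not> in_Delta ((weierstrass p ^^ m) q)"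
    and pr2: "\<forall>m<N. \<forall>k. \<alpha> \<noteq> (weierstrass p ^^ m) q $ k" by auto
  from Suc.IH[OF pr1 pr2] obtain L M where
    L: "(?W ^^ N has_derivative L) (at q)" and M0: "M 0 = 0" and
    T: "(?Wt ^^ N has_derivative (\<lambda>e. extend_pt (L (restrict_pt e) + M (e$None)) (e$None * ?C))) (at (extend_pt q \<alpha>))"
    by blast
  define w where "w = (?W ^^ N) q"
  have wD: "\<not> in_Delta w" and wa: "\<forall>k. \<alpha> \<noteq> w$k"
    using Suc.prems by (auto simp: w_def)
  define z where "z = extend_pt w \<alpha>"
  have zN: "z$None = \<alpha>" and zD: "\<not> in_Delta z" and zr: "restrict_pt z = w"
    using extend_not_Delta[OF wD wa] by (auto simp: z_def)
  have orb: "(?Wt ^^ N) (extend_pt q \<alpha>) = z"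
    using orbit_ext[OF pr2, of N] by (simp add: z_def w_def)
  define D where "D = frechet_derivative ?W (at w)"
  define V where "V = (\<chi> k. (z$Some k - weierstrass p (restrict_pt z) $ k)/(z$Some k - \<alpha>))"
  define c where "c = 1 - poly p \<alpha> / (\<Prod>j\<in>UNIV. \<alpha> - z$Some j)"
  have B: "(?Wt has_derivative (\<lambda>e. extend_pt (D (restrict_pt e) - e$None *s V) (e$None * c))) (at z)"
    using weierstrass_ext_deriv[OF zN zD, of p] by (simp add: D_def V_def c_def zr)
  have WD: "(?W has_derivative D) (at w)"
    unfolding D_def using weierstrass_differentiable[OF wD] by (simp add: frechet_derivative_works)
  have blD: "bounded_linear D" using WD has_derivative_bounded_linear by blast
  interpret D: bounded_linear D by (fact blD)
  have L': "(?W ^^ Suc N has_derivative (D \<circ> L)) (at q)"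
    using diff_chain_at[OF L, of ?W D] WD by (simp add: w_def)
  have T': "(?Wt ^^ Suc N has_derivative ((\<lambda>e. extend_pt (D (restrict_pt e) - e$None *s V) (e$None * c)) \<circ> (\<lambda>e. extend_pt (L (restrict_pt e) + M (e$None)) (e$None * ?C)))) (at (extend_pt q \<alpha>))"
    using diff_chain_at[OF T, of ?Wt] B orb by simp
  have cz: "c = 1 - poly p \<alpha> / (\<Prod>j\<in>UNIV. \<alpha> - (weierstrass p ^^ N) q $ j)"
    by (simp add: c_def z_def w_def)
  show ?case
  proof (intro exI conjI)
    show "(?W ^^ Suc N has_derivative (D \<circ> L)) (at q)" by (fact L')
    show "(\<lambda>t. D (M t) - (t * ?C) *s V) 0 = 0" using M0 D.zero by simp
    show "(?Wt ^^ Suc N has_derivative (\<lambda>e. extend_pt ((D \<circ> L) (restrict_pt e) + (\<lambda>t. D (M t) - (t * ?C) *s V) (e$None))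
             (e$None * (\<Prod>m<Suc N. 1 - poly p \<alpha> / (\<Prod>j\<in>UNIV. \<alpha> - (weierstrass p ^^ m) q $ j))))) (at (extend_pt q \<alpha>))"
      using T' by (simp add: o_def D.add cz mult.assoc algebra_simps)
  qed
qed


lemma lim_ratio:
  fixes w :: "complex^'n::finite"
  assumes monic: "lead_coeff p = 1" and deg: "degree p = CARD('n)"
  shows "((\<lambda>\<alpha>. poly p \<alpha> / (\<Prod>j\<in>UNIV. \<alpha> - w$j)) \<longlongrightarrow> 1) at_infinity"
proof -
  have A: "((\<lambda>\<alpha>. poly (reflect_poly p) (inverse \<alpha>)) \<longlongrightarrow> 1) at_infinity"
  proof -
    have "((\<lambda>\<alpha>. poly (reflect_poly p) (inverse \<alpha>)) \<longlongrightarrow> poly (reflect_poly p) 0) at_infinity"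
      by (intro tendsto_poly tendsto_inverse_0)
    then show ?thesis using monic by simp
  qed
  have B: "((\<lambda>\<alpha>. \<Prod>j\<in>UNIV. 1 - w$j * inverse \<alpha>) \<longlongrightarrow> (\<Prod>j\<in>(UNIV::'n set). 1 - w$j * 0)) at_infinity"
    by (intro tendsto_prod tendsto_diff tendsto_const tendsto_mult tendsto_inverse_0)
  have AB: "((\<lambda>\<alpha>. poly (reflect_poly p) (inverse \<alpha>) / (\<Prod>j\<in>UNIV. 1 - w$j * inverse \<alpha>)) \<longlongrightarrow> 1 / 1) at_infinity"
    using tendsto_divide[OF A B] by simp
  have ev: "eventually (\<lambda>\<alpha>::complex. \<alpha> \<noteq> 0) at_infinity"
    unfolding eventually_at_infinity by (rule exI[of _ 1]) auto
  have "eventually (\<lambda>\<alpha>. poly (reflect_poly p) (inverse \<alpha>) / (\<Prod>j\<in>UNIV. 1 - w$j * inverse \<alpha>) = poly p \<alpha> / (\<Prod>j\<in>UNIV. \<alpha> - w$j)) at_infinity"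
    using ev
  proof eventually_elim
    case (elim \<alpha>)
    have 1: "poly (reflect_poly p) (inverse \<alpha>) = inverse \<alpha> ^ CARD('n) * poly p \<alpha>"
      using elim poly_reflect_poly_nz[of "inverse \<alpha>" p] deg by simp
    have "(\<Prod>j\<in>UNIV. 1 - w$j * inverse \<alpha>) = (\<Prod>j\<in>(UNIV::'n set). inverse \<alpha> * (\<alpha> - w$j))"
      using elim by (intro prod.cong) (auto simp: field_simps)
    also have "\<dots> = inverse \<alpha> ^ CARD('n) * (\<Prod>j\<in>UNIV. \<alpha> - w$j)"
      by (simp add: prod.distrib)
    finally have 2: "(\<Prod>j\<in>UNIV. 1 - w$j * inverse \<alpha>) = inverse \<alpha> ^ CARD('n) * (\<Prod>j\<in>UNIV. \<alpha> - w$j)" .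
    show ?case using elim by (simp add: 1 2)
  qed
  from Lim_transform_eventually[OF AB this] show ?thesis by simp
qed


lemma eigen_block:
  fixes J :: "complex^('n::finite option)^('n option)" and A :: "complex^'n^'n"
  assumes JN: "\<forall>j. J $ None $ j = (if j = None then c else 0)"
    and JS: "\<forall>i k. J $ Some i $ Some k = A $ i $ k"
    and eigA: "\<forall>\<mu>. is_eigenvalue A \<mu> \<longrightarrow> norm \<mu> < 1"
    and c: "norm c < 1"
    and ev: "is_eigenvalue J \<mu>"
  shows "norm \<mu> < 1"
proof -
  from ev obtain v where v0: "v \<noteq> 0" and Jv: "J *v v = \<mu> *s v"
    unfolding is_eigenvalue_def by blast
  have "(J *v v) $ None = (\<mu> *s v) $ None" using Jv by simp
  then have vN: "c * v$None = \<mu> * v$None"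
    using JN by (simp add: matrix_vector_mult_def sum_UNIV_option)
  show ?thesis
  proof (cases "v$None = 0")
    case False
    then have "\<mu> = c" using vN by simp
    then show ?thesis using c by simp
  next
    case True
    have v'0: "restrict_pt v \<noteq> 0"
    proof
      assume "restrict_pt v = 0"
      then have "v = extend_pt 0 0" using True extend_restrict[of v] by simp
      moreover have "extend_pt 0 0 = (0::complex^('n option))"
      proof -
        have "extend_pt 0 0 $ i = (0::complex^('n option)) $ i" for i by (cases i) simp_all
        then show ?thesis by (simp add: vec_eq_iff)
      qed
      ultimately show False using v0 by simp
    qed
    have "A *v restrict_pt v = \<mu> *s restrict_pt v"
    proof -
      have "(A *v restrict_pt v) $ i = (\<mu> *s restrict_pt v) $ i" for i
      proof -
        have "(J *v v) $ Some i = (\<mu> *s v) $ Some i" using Jv by simp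
        then show ?thesis using True JS by (simp add: matrix_vector_mult_def sum_UNIV_option)
      qed
      then show ?thesis by (simp add: vec_eq_iff)
    qed
    then have "is_eigenvalue A \<mu>" using v'0 unfolding is_eigenvalue_def by blast
    then show ?thesis using eigA by blast
  qed
qed


lemma part2:
  fixes p :: "complex poly" and q :: "complex^'n::finite"
  assumes monic: "lead_coeff p = 1" and deg: "degree p = CARD('n)"
    and pp: "periodic_point p q n"
    and eigA: "\<forall>\<mu>. is_eigenvalue (jacobian (weierstrass p ^^ n) (at q)) \<mu> \<longrightarrow> norm \<mu> < 1"
  shows "\<exists>R. \<forall>\<alpha>::complex. norm \<alpha> > R \<longrightarrow>
              periodic_point ([:-\<alpha>, 1:] * p) (extend_pt q \<alpha>) n \<and>
              (weierstrass ([:-\<alpha>, 1:] * p) ^^ n) differentiable (at (extend_pt q \<alpha>)) \<and>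
              (\<forall>\<mu>. is_eigenvalue (jacobian (weierstrass ([:-\<alpha>, 1:] * p) ^^ n)
                                     (at (extend_pt q \<alpha>))) \<mu> \<longrightarrow> norm \<mu> < 1)"
proof -
  let ?o = "\<lambda>m. (weierstrass p ^^ m) q"
  from pp have n0: "n > 0" and nD: "\<forall>m<n. \<not> in_Delta (?o m)" and per: "?o n = q"
    and mn: "\<forall>m. 0 < m \<and> m < n \<longrightarrow> ?o m \<noteq> q"
    unfolding periodic_point_def by auto
  define C where "C = (\<lambda>\<alpha>. \<Prod>m<n. 1 - poly p \<alpha> / (\<Prod>j\<in>UNIV. \<alpha> - ?o m $ j))"
  have "(C \<longlongrightarrow> (\<Prod>m<n. 1 - 1)) at_infinity"
    unfolding C_def by (intro tendsto_prod tendsto_diff tendsto_const lim_ratio[OF monic deg])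
  then have "(C \<longlongrightarrow> 0) at_infinity" using n0 by (simp add: zero_power)
  then have "((\<lambda>\<alpha>. norm (C \<alpha>)) \<longlongrightarrow> 0) at_infinity" by (rule tendsto_norm_zero)
  then have ev1: "eventually (\<lambda>\<alpha>. norm (C \<alpha>) < 1) at_infinity"
    by (rule order_tendstoD(2)) simp
  have ne: "eventually (\<lambda>\<alpha>::complex. \<alpha> \<noteq> v) at_infinity" for v
    unfolding eventually_at_infinity
    by (rule exI[of _ "norm v + 1"]) auto
  have ev2: "eventually (\<lambda>\<alpha>. \<forall>m\<in>{..<n}. \<forall>k. \<alpha> \<noteq> ?o m $ k) at_infinity"
    by (intro eventually_ball_finite ballI eventually_all_finite ne) simp
  obtain b where b: "\<And>\<alpha>. b \<le> norm \<alpha> \<Longrightarrow> norm (C \<alpha>) < 1 \<and> (\<forall>m\<in>{..<n}. \<forall>k. \<alpha> \<noteq> ?o m $ k)"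
    using eventually_conj[OF ev1 ev2] unfolding eventually_at_infinity by blast
  show ?thesis
  proof (rule exI[of _ b], intro allI impI conjI)
    fix \<alpha> :: complex assume "norm \<alpha> > b"
    with b have Cl: "norm (C \<alpha>) < 1" and co: "\<forall>m<n. \<forall>k. \<alpha> \<noteq> ?o m $ k" by auto
    let ?Wt = "weierstrass ([:-\<alpha>, 1:] * p)"
    note orb = orbit_ext[OF co]
    show "periodic_point ([:-\<alpha>, 1:] * p) (extend_pt q \<alpha>) n"
      unfolding periodic_point_def
    proof (intro conjI)
      show "0 < n" by fact
      show "\<forall>m<n. \<not> in_Delta ((?Wt ^^ m) (extend_pt q \<alpha>))"
      proof (intro allI impI)
        fix m assume "m < n"
        then show "\<not> in_Delta ((?Wt ^^ m) (extend_pt q \<alpha>))"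
          using orb[of m] extend_not_Delta[of "?o m" \<alpha>] nD co by simp
      qed
      show "(?Wt ^^ n) (extend_pt q \<alpha>) = extend_pt q \<alpha>" using orb[of n] per by simp
      show "\<forall>m. 0 < m \<and> m < n \<longrightarrow> (?Wt ^^ m) (extend_pt q \<alpha>) \<noteq> extend_pt q \<alpha>"
      proof (intro allI impI notI)
        fix m assume m: "0 < m \<and> m < n"
        assume "(?Wt ^^ m) (extend_pt q \<alpha>) = extend_pt q \<alpha>"
        then have "extend_pt (?o m) \<alpha> = extend_pt q \<alpha>" using orb[of m] m by simp
        then have "restrict_pt (extend_pt (?o m) \<alpha>) = restrict_pt (extend_pt q \<alpha>)" by simp
        then show False using mn m by simp
      qed
    qed
    from iter_deriv[OF nD co] obtain L M where
      L: "(weierstrass p ^^ n has_derivative L) (at q)" and M0: "M 0 = 0" and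
      T: "(?Wt ^^ n has_derivative (\<lambda>e. extend_pt (L (restrict_pt e) + M (e$None)) (e$None * C \<alpha>))) (at (extend_pt q \<alpha>))"
      unfolding C_def by blast
    show "(?Wt ^^ n) differentiable (at (extend_pt q \<alpha>))"
      using T unfolding differentiable_def by blast
    have JJ: "jacobian (?Wt ^^ n) (at (extend_pt q \<alpha>)) = matrix (\<lambda>e. extend_pt (L (restrict_pt e) + M (e$None)) (e$None * C \<alpha>))"
      unfolding jacobian_def using frechet_derivative_at[OF T] by simp
    have AA: "jacobian (weierstrass p ^^ n) (at q) = matrix L"
      unfolding jacobian_def using frechet_derivative_at[OF L] by simp
      fix \<mu> assume ev: "is_eigenvalue (jacobian (?Wt ^^ n) (at (extend_pt q \<alpha>))) \<mu>"
      show "norm \<mu> < 1"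
      proof (rule eigen_block[OF _ _ eigA Cl ev])
        show "\<forall>j. jacobian (?Wt ^^ n) (at (extend_pt q \<alpha>)) $ None $ j = (if j = None then C \<alpha> else 0)"
          unfolding JJ by (simp add: matrix_def axis_def)
        show "\<forall>i k. jacobian (?Wt ^^ n) (at (extend_pt q \<alpha>)) $ Some i $ Some k = jacobian (weierstrass p ^^ n) (at q) $ i $ k"
          unfolding JJ AA by (simp add: matrix_def restrict_axis_Some M0; simp add: axis_def M0)
      qed
  qed
qed


theorem lemma3p6:
  fixes p :: "complex poly"
  assumes monic: "lead_coeff p = 1" and deg: "degree p = CARD('n::finite)"
  shows
   "(\<forall>(\<alpha>::complex) (z::complex^('n option)).
       z $ None = \<alpha> \<and> \<not> in_Delta z \<longrightarrow>
       weierstrass ([:-\<alpha>, 1:] * p) differentiable (at z) \<and>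
       weierstrass p differentiable (at (restrict_pt z)) \<and>
       (\<forall>i j. jacobian (weierstrass ([:-\<alpha>, 1:] * p)) (at z) $ Some i $ Some j
               = jacobian (weierstrass p) (at (restrict_pt z)) $ i $ j) \<and>
       (\<forall>j. jacobian (weierstrass ([:-\<alpha>, 1:] * p)) (at z) $ None $ Some j = 0) \<and>
       jacobian (weierstrass ([:-\<alpha>, 1:] * p)) (at z) $ None $ None
         = 1 - poly p \<alpha> / (\<Prod>j\<in>UNIV. \<alpha> - z $ Some j))
    \<and>
    (\<forall>(q::complex^'n) n.
       periodic_point p q n \<and>
       (\<forall>\<mu>. is_eigenvalue (jacobian (weierstrass p ^^ n) (at q)) \<mu> \<longrightarrow> norm \<mu> < 1)
       \<longrightarrow> (\<exists>R. \<forall>\<alpha>::complex. norm \<alpha> > R \<longrightarrow>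
              periodic_point ([:-\<alpha>, 1:] * p) (extend_pt q \<alpha>) n \<and>
              (weierstrass ([:-\<alpha>, 1:] * p) ^^ n) differentiable (at (extend_pt q \<alpha>)) \<and>
              (\<forall>\<mu>. is_eigenvalue (jacobian (weierstrass ([:-\<alpha>, 1:] * p) ^^ n)
                                     (at (extend_pt q \<alpha>))) \<mu> \<longrightarrow> norm \<mu> < 1)))"
proof (rule conjI)
  show "\<forall>(\<alpha>::complex) (z::complex^('n option)).
       z $ None = \<alpha> \<and> \<not> in_Delta z \<longrightarrow>
       weierstrass ([:-\<alpha>, 1:] * p) differentiable (at z) \<and>
       weierstrass p differentiable (at (restrict_pt z)) \<and>
       (\<forall>i j. jacobian (weierstrass ([:-\<alpha>, 1:] * p)) (at z) $ Some i $ Some j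
               = jacobian (weierstrass p) (at (restrict_pt z)) $ i $ j) \<and>
       (\<forall>j. jacobian (weierstrass ([:-\<alpha>, 1:] * p)) (at z) $ None $ Some j = 0) \<and>
       jacobian (weierstrass ([:-\<alpha>, 1:] * p)) (at z) $ None $ None
         = 1 - poly p \<alpha> / (\<Prod>j\<in>UNIV. \<alpha> - z $ Some j)"
    by (intro allI impI, elim conjE, rule part1)
next
  show "\<forall>(q::complex^'n) n.
       periodic_point p q n \<and>
       (\<forall>\<mu>. is_eigenvalue (jacobian (weierstrass p ^^ n) (at q)) \<mu> \<longrightarrow> norm \<mu> < 1)
       \<longrightarrow> (\<exists>R. \<forall>\<alpha>::complex. norm \<alpha> > R \<longrightarrow>
              periodic_point ([:-\<alpha>, 1:] * p) (extend_pt q \<alpha>) n \<and>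
              (weierstrass ([:-\<alpha>, 1:] * p) ^^ n) differentiable (at (extend_pt q \<alpha>)) \<and>
              (\<forall>\<mu>. is_eigenvalue (jacobian (weierstrass ([:-\<alpha>, 1:] * p) ^^ n)
                                     (at (extend_pt q \<alpha>))) \<mu> \<longrightarrow> norm \<mu> < 1))"
    using part2[OF monic deg] by blast
qed

end
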